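(* Let $G$ be a cograph whose edge connectivity is exactly $k$, and let $X$ be the set of vertices of degree $k$ in $G$. Then every set $E_{ca}\subseteq E(\overline{G})$ such that $G\cup E_{ca}$ is $(k+1)$-edge connected satisfies $|E_{ca}|\geq\rho(\overline{G}[X])$.
   Context: A cograph is a graph that can be built from single vertices by repeatedly taking disjoint unions and joins; equivalently a graph with no induced path on four vertices. $\overline{G}$ is the complement of $G$, $\overline{G}[X]$ the subgraph of $\overline{G}$ induced by $X$, and $G\cup F=(V(G),E(G)\cup F)$. The edge connectivity of a connected graph is the least size of a set of edges whose removal disconnects it; a graph is $k$-edge connected if its edge connectivity is $k$. An edge cover of a graph is a set of edges such that every vertex is incident to at least one of them. For a graph $H$: if $H$ is connected with at least two vertices, $\rho(H)$ is the minimum cardinality of an edge cover of $H$; for a trivial (one-vertex) component $H_i$, $\rho(H_i)=1$; if $H$ has components $H_1,\ldots,H_r$, $\rho(H)=\sum_i\rho(H_i)$. *)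

theory Defs
  imports Main
begin

definition all_pairs :: "'a set \<Rightarrow> 'a set set" where
  "all_pairs V = {{u, v} | u v. u \<in> V \<and> v \<in> V \<and> u \<noteq> v}"

definition simple_graph :: "'a set \<Rightarrow> 'a set set \<Rightarrow> bool" where
  "simple_graph V E \<longleftrightarrow> finite V \<and> E \<subseteq> all_pairs V"

inductive cograph :: "'a set \<Rightarrow> 'a set set \<Rightarrow> bool" where
  single: "cograph {v} {}"
| union: "\<lbrakk>cograph V1 E1; cograph V2 E2; V1 \<inter> V2 = {}\<rbrakk>
            \<Longrightarrow> cograph (V1 \<union> V2) (E1 \<union> E2)"
| join: "\<lbrakk>cograph V1 E1; cograph V2 E2; V1 \<inter> V2 = {}\<rbrakk>
            \<Longrightarrow> cograph (V1 \<union> V2) (E1 \<union> E2 \<union> {{u, v} | u v. u \<in> V1 \<and> v \<in> V2})"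

definition adj_rel :: "'a set set \<Rightarrow> ('a \<times> 'a) set" where
  "adj_rel E = {(u, v). {u, v} \<in> E \<and> u \<noteq> v}"

definition connected_graph :: "'a set \<Rightarrow> 'a set set \<Rightarrow> bool" where
  "connected_graph V E \<longleftrightarrow> V \<noteq> {} \<and> (\<forall>u\<in>V. \<forall>v\<in>V. (u, v) \<in> (adj_rel E)\<^sup>*)"

definition degree :: "'a set set \<Rightarrow> 'a \<Rightarrow> nat" where
  "degree E v = card {e \<in> E. v \<in> e}"

definition edge_connectivity :: "'a set \<Rightarrow> 'a set set \<Rightarrow> nat" where
  "edge_connectivity V E = (LEAST n. \<exists>F \<subseteq> E. card F = n \<and> \<not> connected_graph V (E - F))"

text \<open>As in the paper: a graph is k-edge connected if it is connected and its edge
  connectivity is (exactly) k.\<close>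
definition k_edge_connected :: "nat \<Rightarrow> 'a set \<Rightarrow> 'a set set \<Rightarrow> bool" where
  "k_edge_connected k V E \<longleftrightarrow> connected_graph V E \<and> edge_connectivity V E = k"

definition complement_edges :: "'a set \<Rightarrow> 'a set set \<Rightarrow> 'a set set" where
  "complement_edges V E = all_pairs V - E"

definition induced_edges :: "'a set set \<Rightarrow> 'a set \<Rightarrow> 'a set set" where
  "induced_edges E X = {e \<in> E. e \<subseteq> X}"

definition components :: "'a set \<Rightarrow> 'a set set \<Rightarrow> 'a set set" where
  "components V E = {{v \<in> V. (u, v) \<in> (adj_rel E)\<^sup>*} | u. u \<in> V}"

definition is_edge_cover :: "'a set \<Rightarrow> 'a set set \<Rightarrow> 'a set set \<Rightarrow> bool" where
  "is_edge_cover V E F \<longleftrightarrow> F \<subseteq> E \<and> (\<forall>v\<in>V. \<exists>e\<in>F. v \<in> e)"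

definition min_edge_cover :: "'a set \<Rightarrow> 'a set set \<Rightarrow> nat" where
  "min_edge_cover V E = (LEAST n. \<exists>F. is_edge_cover V E F \<and> card F = n)"

definition rho :: "'a set \<Rightarrow> 'a set set \<Rightarrow> nat" where
  "rho V E = (\<Sum>C \<in> components V E.
      if card C = 1 then 1 else min_edge_cover C (induced_edges E C))"

end

theory Submission
  imports Defs
begin

lemma adj_rel_sym: "sym (adj_rel E)"
  by (auto simp: sym_def adj_rel_def insert_commute)

lemma rtr_sym: "(u,v) \<in> (adj_rel E)\<^sup>* \<Longrightarrow> (v,u) \<in> (adj_rel E)\<^sup>*"
  using sym_rtrancl[OF adj_rel_sym[of E]] unfolding sym_def by blast

lemma isolated: "\<forall>e\<in>E. v \<notin> e \<Longrightarrow> (v,u) \<in> (adj_rel E)\<^sup>* \<Longrightarrow> u = v"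
  by (erule converse_rtranclE) (auto simp: adj_rel_def)

theorem lemma7:
  fixes V :: "'a set" and E :: "'a set set" and k :: nat
  assumes "simple_graph V E"
    and "cograph V E"
    and "k_edge_connected k V E"
    and "X = {v \<in> V. degree E v = k}"
    and "Eca \<subseteq> complement_edges V E"
    and "k_edge_connected (k + 1) V (E \<union> Eca)"
  shows "card Eca \<ge> rho X (induced_edges (complement_edges V E) X)"
proof -
  let ?EX = "induced_edges (complement_edges V E) X"
  let ?R = "adj_rel ?EX"
  have finV: "finite V" using assms(1) simple_graph_def by blast
  have "all_pairs V \<subseteq> Pow V" by (auto simp: all_pairs_def)
  then have finP: "finite (all_pairs V)" using finV finite_subset by blast
  have EcaP: "Eca \<subseteq> all_pairs V" using assms(5) by (auto simp: complement_edges_def)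
  have finEca: "finite Eca" using EcaP finP finite_subset by blast
  have XV: "X \<subseteq> V" using assms(4) by auto
  have finX: "finite X" using XV finV finite_subset by blast
  have two: "\<exists>u\<in>V. u \<noteq> v" if "v\<in>V" for v
  proof (rule ccontr)
    assume "\<not> ?thesis" then have "V = {v}" using that by blast
    then have "all_pairs V = {}" by (auto simp: all_pairs_def)
    then have "E = {}" "Eca = {}" using assms(1) EcaP unfolding simple_graph_def by blast+
    then have "E \<union> Eca = E" by simp
    then show False using assms(3,6) unfolding k_edge_connected_def by simp
  qed
  have cov: "\<exists>e\<in>Eca. v\<in>e" if "v \<in> X" for v
  proof (rule ccontr)
    assume nc: "\<not> ?thesis"
    have vV: "v\<in>V" "degree E v = k" using that assms(4) by auto
    let ?F = "{e \<in> E \<union> Eca. v \<in> e}"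
    have "?F = {e\<in>E. v\<in>e}" using nc by auto
    then have cF: "card ?F = k" using vV unfolding degree_def by simp
    have Fs: "?F \<subseteq> E \<union> Eca" by blast
    have nc2: "\<not> connected_graph V (E \<union> Eca - ?F)"
    proof
      assume a: "connected_graph V (E \<union> Eca - ?F)"
      obtain u where u: "u\<in>V" "u\<noteq>v" using two vV by blast
      then have "(v,u) \<in> (adj_rel (E \<union> Eca - ?F))\<^sup>*" using a vV unfolding connected_graph_def by blast
      moreover have "\<forall>e\<in>E \<union> Eca - ?F. v \<notin> e" by blast
      ultimately show False using isolated[of "E \<union> Eca - ?F" v u] u by blast
    qed
    have "\<exists>F \<subseteq> E \<union> Eca. card F = k \<and> \<not> connected_graph V (E \<union> Eca - F)"
      using Fs cF nc2 by blast
    then have "edge_connectivity V (E \<union> Eca) \<le> k" unfolding edge_connectivity_def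
      by (rule Least_le)
    moreover have "edge_connectivity V (E \<union> Eca) = k + 1" using assms(6) unfolding k_edge_connected_def by blast
    ultimately show False by simp
  qed
  define comp where "comp r = {y\<in>X. (r,y) \<in> ?R\<^sup>*}" for r
  have Cs: "components X ?EX = comp ` X" by (auto simp: components_def comp_def)
  have compeq: "comp x = comp r" if "x \<in> comp r" for x r
  proof -
    have rx: "(r,x) \<in> ?R\<^sup>*" using that comp_def by auto
    have xr: "(x,r) \<in> ?R\<^sup>*" using rtr_sym[OF rx] .
    show ?thesis unfolding comp_def using rx xr
      by (auto intro: rtrancl_trans)
  qed
  have disj: "C1 = C2" if h: "C1 \<in> comp`X" "C2 \<in> comp`X" "x\<in>C1" "x\<in>C2" for C1 C2 x
  proof -
    obtain r1 r2 where "C1 = comp r1" "C2 = comp r2" using h(1,2) by blast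
    then show ?thesis using compeq[of x r1] compeq[of x r2] h(3,4) by simp
  qed
  have EcaEX: "e \<in> ?EX" if "e \<in> Eca" "e \<subseteq> X" for e
    using that assms(5) by (auto simp: induced_edges_def)
  have pairX: "b \<in> C" if h: "{a,b} \<in> Eca" "a \<in> C" "b \<in> X" "C \<in> comp`X" for a b C
  proof (cases "a = b")
    case True then show ?thesis using that by simp
  next
    case False
    obtain r where r: "C = comp r" using h(4) by blast
    have "a \<in> X" using that r comp_def by auto
    then have "{a,b} \<in> ?EX" using EcaEX that by auto
    then have "(a,b) \<in> ?R" using False by (auto simp: adj_rel_def)
    moreover have "(r,a) \<in> ?R\<^sup>*" using that r comp_def by auto
    ultimately have "(r,b) \<in> ?R\<^sup>*" by auto
    then show ?thesis using r that comp_def by auto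
  qed
  have eform: "\<exists>a b. e = {a,b} \<and> a \<noteq> b" if "e \<in> Eca" for e
    using that EcaP unfolding all_pairs_def by blast
  define F where "F C = {e\<in>Eca. e \<inter> C \<noteq> {}}" for C
  have finF: "finite (F C)" for C using finEca F_def by auto
  have disjF: "F C1 \<inter> F C2 = {}" if "C1\<in>comp`X" "C2\<in>comp`X" "C1\<noteq>C2" for C1 C2
  proof (rule ccontr)
    assume "F C1 \<inter> F C2 \<noteq> {}"
    then obtain e x y where e: "e \<in> Eca" "x \<in> e \<inter> C1" "y \<in> e \<inter> C2" unfolding F_def by auto
    obtain a b where ab: "e = {a,b}" "a \<noteq> b" using eform e by blast
    have "C1 \<subseteq> X" "C2 \<subseteq> X" using that comp_def by auto
    show False
    proof (cases "x = y")
      case True then show False using disj that e by auto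
    next
      case False
      then have "e = {x,y}" using ab e by auto
      then have "y \<in> C1" using pairX[of x y C1] e that \<open>C2 \<subseteq> X\<close> by auto
      then show False using disj that e by auto
    qed
  qed
  have step: "(if card C = 1 then 1 else min_edge_cover C (induced_edges ?EX C)) \<le> card (F C)"
    if C: "C \<in> comp`X" for C
  proof -
    obtain r where r: "r \<in> X" "C = comp r" using C by auto
    have CX: "C \<subseteq> X" using r comp_def by auto
    have rC: "r \<in> C" using r comp_def by auto
    have finC: "finite C" using CX finX finite_subset by blast
    show ?thesis
    proof (cases "card C = 1")
      case True
      then obtain x where "C = {x}" by (rule card_1_singletonE)
      then have "C = {r}" using rC by simp
      obtain e where "e \<in> Eca" "r \<in> e" using cov r by blast
      then have "e \<in> F C" using \<open>C = {r}\<close> F_def by auto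
      then have "card (F C) > 0" using finF[of C] card_gt_0_iff by blast
      then show ?thesis using True by simp
    next
      case False
      have nb: "\<exists>w. w \<in> C \<and> {v,w} \<in> induced_edges ?EX C" if vC: "v \<in> C" for v
      proof -
        have cv: "comp v = C" using compeq[of v r] r(2) vC by blast
        have "\<exists>w\<in>C. w \<noteq> v"
        proof (rule ccontr)
          assume "\<not> ?thesis" then have "C = {v}" using vC by blast
          then show False using False by simp
        qed
        then obtain w where w: "w \<in> C" "w \<noteq> v" by blast
        then have "(v,w) \<in> ?R\<^sup>*" using cv comp_def by auto
        then obtain z where z: "(v,z) \<in> ?R" "(z,w) \<in> ?R\<^sup>*" using w(2)
          by (blast elim: converse_rtranclE)
        then have vz: "{v,z} \<in> ?EX" by (auto simp: adj_rel_def)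
        then have "z \<in> X" by (auto simp: induced_edges_def)
        then have "z \<in> comp v" using z comp_def by auto
        then have "z \<in> C" using cv by simp
        then show ?thesis using vz vC by (auto simp: induced_edges_def)
      qed
      define nbf where "nbf v = (SOME w. w \<in> C \<and> {v,w} \<in> induced_edges ?EX C)" for v
      have nbf: "nbf v \<in> C \<and> {v, nbf v} \<in> induced_edges ?EX C" if "v \<in> C" for v
        unfolding nbf_def using nb[OF that] by (rule someI_ex)
      define g where "g e = (if e \<subseteq> C then e else {SOME a. a \<in> e \<inter> C, nbf (SOME a. a \<in> e \<inter> C)})" for e
      have "is_edge_cover C (induced_edges ?EX C) (g ` F C)"
        unfolding is_edge_cover_def
      proof
        show "g ` F C \<subseteq> induced_edges ?EX C"
        proof
          fix f assume "f \<in> g ` F C"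
          then obtain e where e: "e \<in> F C" "f = g e" by auto
          show "f \<in> induced_edges ?EX C"
          proof (cases "e \<subseteq> C")
            case True
            then have "e \<in> ?EX" using EcaEX e CX F_def by auto
            then show ?thesis using True e g_def by (auto simp: induced_edges_def)
          next
            case False
            have "\<exists>a. a \<in> e \<inter> C" using e F_def by auto
            then have "(SOME a. a \<in> e \<inter> C) \<in> C" by (metis (mono_tags, lifting) IntD2 someI_ex)
            then show ?thesis using nbf False e g_def by auto
          qed
        qed
      next
        show "\<forall>v\<in>C. \<exists>e\<in>g ` F C. v \<in> e"
        proof
          fix v assume vC: "v \<in> C"
          obtain e where e: "e \<in> Eca" "v \<in> e" using cov vC CX by blast
          then have eF: "e \<in> F C" using vC F_def by auto
          show "\<exists>e\<in>g ` F C. v \<in> e"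
          proof (cases "e \<subseteq> C")
            case True then show ?thesis using eF e g_def by auto
          next
            case False
            obtain a b where ab: "e = {a,b}" "a \<noteq> b" using eform e by blast
            obtain w where w: "e = {v,w}" "w \<notin> C" using ab e False vC by auto
            then have "e \<inter> C = {v}" using vC by auto
            then have "(SOME a. a \<in> e \<inter> C) = v" by simp
            then show ?thesis using eF False g_def by (intro bexI[of _ "g e"]) auto
          qed
        qed
      qed
      then have "min_edge_cover C (induced_edges ?EX C) \<le> card (g ` F C)"
        unfolding min_edge_cover_def by (intro Least_le) blast
      also have "\<dots> \<le> card (F C)" by (rule card_image_le[OF finF])
      finally show ?thesis using False by simp
    qed
  qed
  have "rho X ?EX = (\<Sum>C\<in>comp`X. if card C = 1 then 1 else min_edge_cover C (induced_edges ?EX C))"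
    unfolding rho_def Cs ..
  also have "\<dots> \<le> (\<Sum>C\<in>comp`X. card (F C))" by (rule sum_mono) (rule step)
  also have "\<dots> = card (\<Union>C\<in>comp`X. F C)"
    by (rule card_UN_disjoint[symmetric]) (use finX finF disjF in auto)
  also have "\<dots> \<le> card Eca" by (rule card_mono[OF finEca]) (auto simp: F_def)
  finally show ?thesis .
qed

end
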